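(* Let $\alpha>0$ with $\alpha\neq1$. There is a constant $C=C(\alpha)$ such that for every $R>0$, every $b\in\mathbb{R}$, and each choice of sign $\pm$, $$\Big|\int_0^R e^{i(b e^{x}\pm e^{\alpha x})}\,dx\Big|\le C.$$ *)

theory Defs
  imports "HOL-Analysis.Analysis"
begin

end

theory Submission
  imports Defs
begin
lemma F_deriv:
  fixes \<phi> \<phi>' \<phi>'' :: "real \<Rightarrow> real"
  assumes d1: "(\<phi> has_real_derivative \<phi>' x) (at x within S)"
      and d2: "(\<phi>' has_real_derivative \<phi>'' x) (at x within S)"
      and nz: "\<phi>' x \<noteq> 0"
  shows "((\<lambda>x. - \<i> * cis (\<phi> x) / complex_of_real (\<phi>' x)) has_vector_derivative
           (cis (\<phi> x) + \<i> * cis (\<phi> x) * complex_of_real (\<phi>'' x / (\<phi>' x)^2))) (at x within S)"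
proof -
  have c1: "((\<lambda>x. cis (\<phi> x)) has_vector_derivative (\<phi>' x *\<^sub>R (\<i> * cis (\<phi> x)))) (at x within S)"
    using has_derivative_cis[OF d1[unfolded has_field_derivative_def]]
    by (simp add: has_vector_derivative_def mult.commute)
  have d3: "((\<lambda>x. inverse (\<phi>' x)) has_real_derivative (- (inverse (\<phi>' x) * \<phi>'' x * inverse (\<phi>' x)))) (at x within S)"
    using DERIV_inverse_fun[OF d2 nz] by (simp add: field_simps power2_eq_square)
  have c2: "((\<lambda>x. complex_of_real (inverse (\<phi>' x))) has_vector_derivative complex_of_real (- (inverse (\<phi>' x) * \<phi>'' x * inverse (\<phi>' x)))) (at x within S)"
    by (rule has_vector_derivative_of_real[OF d3])
  have "((\<lambda>x. (- \<i> * cis (\<phi> x)) * complex_of_real (inverse (\<phi>' x))) has_vector_derivative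
      ((- \<i> * cis (\<phi> x)) * complex_of_real (- (inverse (\<phi>' x) * \<phi>'' x * inverse (\<phi>' x)))
       + (- \<i> * (\<phi>' x *\<^sub>R (\<i> * cis (\<phi> x)))) * complex_of_real (inverse (\<phi>' x)))) (at x within S)"
    apply (rule has_vector_derivative_mult)
     apply (rule has_vector_derivative_mult_right) apply (rule c1)
    by (rule c2)
  then show ?thesis
    apply (simp add: divide_inverse)
    apply (erule has_vector_derivative_eq_rhs)
    using nz by (simp add: field_simps power2_eq_square scaleR_conv_of_real)
qed
lemma vdc:
  fixes \<phi> \<phi>' \<phi>'' :: "real \<Rightarrow> real"
  assumes ac: "a \<le> c"
    and d1: "\<And>x. x \<in> {a..c} \<Longrightarrow> (\<phi> has_real_derivative \<phi>' x) (at x)"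
    and d2: "\<And>x. x \<in> {a..c} \<Longrightarrow> (\<phi>' has_real_derivative \<phi>'' x) (at x)"
    and nz: "\<And>x. x \<in> {a..c} \<Longrightarrow> \<phi>' x \<noteq> 0"
    and c2: "continuous_on {a..c} \<phi>''"
  shows "norm (integral {a..c} (\<lambda>x. cis (\<phi> x))) \<le> 1 / \<bar>\<phi>' a\<bar> + 1 / \<bar>\<phi>' c\<bar>
           + integral {a..c} (\<lambda>x. \<bar>\<phi>'' x\<bar> / (\<phi>' x)^2)"
proof -
  define F where "F = (\<lambda>x. - \<i> * cis (\<phi> x) / complex_of_real (\<phi>' x))"
  define G where "G = (\<lambda>x. \<i> * cis (\<phi> x) * complex_of_real (\<phi>'' x / (\<phi>' x)^2))"
  have c0: "continuous_on {a..c} \<phi>"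
    by (meson continuous_at_imp_continuous_on DERIV_isCont d1)
  have c1: "continuous_on {a..c} \<phi>'"
    by (meson continuous_at_imp_continuous_on DERIV_isCont d2)
  have cG: "continuous_on {a..c} G" unfolding G_def
    using c0 c1 c2 nz by (auto intro!: continuous_intros)
  have cH: "continuous_on {a..c} (\<lambda>x. \<bar>\<phi>'' x\<bar> / (\<phi>' x)^2)"
    using c1 c2 nz by (auto intro!: continuous_intros)
  have iG: "(G has_integral integral {a..c} G) {a..c}"
    using cG integrable_continuous_interval by blast
  have "((\<lambda>x. cis (\<phi> x) + G x) has_integral F c - F a) {a..c}"
    unfolding F_def G_def
    apply (rule fundamental_theorem_of_calculus[OF ac])
    apply (rule F_deriv)
    using d1 d2 nz has_field_derivative_at_within by blast+
  from has_integral_diff[OF this iG]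
  have "((\<lambda>x. cis (\<phi> x)) has_integral (F c - F a - integral {a..c} G)) {a..c}" by simp
  hence eq: "integral {a..c} (\<lambda>x. cis (\<phi> x)) = F c - F a - integral {a..c} G"
    by (rule integral_unique)
  have nG: "norm (integral {a..c} G) \<le> integral {a..c} (\<lambda>x. \<bar>\<phi>'' x\<bar> / (\<phi>' x)^2)"
    apply (rule integral_norm_bound_integral)
    using cG cH integrable_continuous_interval apply blast+
    unfolding G_def norm_mult norm_of_real by simp
  have nF: "norm (F x) = 1 / \<bar>\<phi>' x\<bar>" for x
    by (simp add: F_def norm_divide norm_mult)
  have "norm (integral {a..c} (\<lambda>x. cis (\<phi> x))) \<le> norm (F c) + norm (F a) + norm (integral {a..c} G)"
    unfolding eq using norm_triangle_ineq4[of "F c - F a" "integral {a..c} G"] norm_triangle_ineq4[of "F c" "F a"]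
    by linarith
  then show ?thesis using nG nF by simp
qed
lemma pw_bound:
  fixes P Q E c0 k :: real
  assumes "E > 0" "c0 > 0" "k \<ge> 0" "P \<ge> c0 * E" "\<bar>Q\<bar> \<le> P + k * E"
  shows "\<bar>Q\<bar> / P^2 \<le> (1/c0 + k/c0^2) * (1/E)"
proof -
  have P0: "P > 0" using mult_pos_pos[OF assms(2,1)] assms(4) by linarith
  have "\<bar>Q\<bar> / P^2 \<le> (P + k*E) / P^2" using assms P0 by (simp add: divide_right_mono)
  also have "\<dots> = 1/P + k*E/P^2" using P0 by (simp add: field_simps power2_eq_square)
  also have "1/P \<le> 1/(c0*E)" using assms P0 by (simp add: frac_le mult_pos_pos)
  also have "k*E/P^2 \<le> k*E/(c0*E)^2"
    apply (rule divide_left_mono) using assms P0 by (auto intro!: power_mono mult_pos_pos)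
  also have "1/(c0*E) + k*E/(c0*E)^2 = (1/c0 + k/c0^2) * (1/E)"
    using assms by (simp add: field_simps power2_eq_square)
  finally show ?thesis by simp
qed

lemma exp_int:
  fixes \<alpha> K a c :: real
  assumes "\<alpha> > 0" "a \<le> c" "0 \<le> a" "K \<ge> 0"
  shows "integral {a..c} (\<lambda>y. K * (1 / exp (\<alpha> * y))) \<le> K / \<alpha>"
proof -
  have "((\<lambda>y. K * (1 / exp (\<alpha> * y))) has_integral ((- K * exp (-(\<alpha> * c)) / \<alpha>) - (- K * exp (-(\<alpha> * a)) / \<alpha>))) {a..c}"
    apply (rule fundamental_theorem_of_calculus[OF assms(2)])
    apply (rule has_vector_derivative_at_within)
    unfolding has_real_derivative_iff_has_vector_derivative[symmetric]
    using assms(1) by (auto intro!: derivative_eq_intros simp: exp_minus field_simps)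
  hence "integral {a..c} (\<lambda>y. K * (1 / exp (\<alpha> * y))) = K * (exp (-(\<alpha> * a)) - exp (-(\<alpha> * c))) / \<alpha>"
    by (auto dest!: integral_unique simp: algebra_simps diff_divide_distrib)
  also have "\<dots> \<le> K * 1 / \<alpha>"
    apply (rule divide_right_mono) apply (rule mult_left_mono)
    subgoal proof -
      have "0 \<le> \<alpha> * a" using assms by simp
      hence "exp (- (\<alpha> * a)) \<le> 1" by simp
      thus ?thesis using exp_gt_zero[of "- (\<alpha> * c)"] by linarith
    qed
    using assms by auto
  finally show ?thesis by simp
qed
lemma pieceB:
  fixes \<alpha> b s c0 a c :: real
  assumes al: "\<alpha> > 0" and s1: "\<bar>s\<bar> = 1" and a0: "0 \<le> a" and ac: "a \<le> c" and c0: "c0 > 0"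
    and low: "\<And>y. y \<in> {a..c} \<Longrightarrow> c0 * exp (\<alpha> * y) \<le> \<bar>b * exp y + s * \<alpha> * exp (\<alpha> * y)\<bar>"
  shows "norm (integral {a..c} (\<lambda>x. cis (b * exp x + s * exp (\<alpha> * x))))
           \<le> 2 / c0 + (1/c0 + \<alpha> * \<bar>\<alpha> - 1\<bar> / c0^2) / \<alpha>"
proof -
  define p where "p = (\<lambda>y. b * exp y + s * \<alpha> * exp (\<alpha> * y))"
  define q where "q = (\<lambda>y. b * exp y + s * \<alpha>^2 * exp (\<alpha> * y))"
  define K where "K = 1/c0 + \<alpha> * \<bar>\<alpha> - 1\<bar> / c0^2"
  have K0: "K \<ge> 0" unfolding K_def using c0 al by simp
  have lowp: "c0 \<le> \<bar>p y\<bar>" if "y \<in> {a..c}" for y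
  proof -
    have "1 \<le> exp (\<alpha> * y)" using that a0 al by simp
    hence "c0 \<le> c0 * exp (\<alpha> * y)" using c0 by simp
    thus ?thesis using low[OF that] unfolding p_def by linarith
  qed
  have nz: "p y \<noteq> 0" if "y \<in> {a..c}" for y using lowp[OF that] c0 by auto
  have "norm (integral {a..c} (\<lambda>x. cis (b * exp x + s * exp (\<alpha> * x)))) \<le> 1 / \<bar>p a\<bar> + 1 / \<bar>p c\<bar>
           + integral {a..c} (\<lambda>x. \<bar>q x\<bar> / (p x)^2)"
    apply (rule vdc[OF ac])
    subgoal unfolding p_def by (auto intro!: derivative_eq_intros simp: field_simps)
    subgoal unfolding p_def q_def by (auto intro!: derivative_eq_intros simp: field_simps power2_eq_square)
    using nz unfolding q_def by (auto intro!: continuous_intros)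
  also have "1 / \<bar>p a\<bar> \<le> 1 / c0" using lowp[of a] ac c0 by (simp add: frac_le)
  also have "1 / \<bar>p c\<bar> \<le> 1 / c0" using lowp[of c] ac c0 by (simp add: frac_le)
  also have "integral {a..c} (\<lambda>x. \<bar>q x\<bar> / (p x)^2) \<le> integral {a..c} (\<lambda>y. K * (1 / exp (\<alpha> * y)))"
  proof (rule integral_le)
    show "(\<lambda>x. \<bar>q x\<bar> / (p x)^2) integrable_on {a..c}"
      using nz unfolding p_def q_def
      by (intro integrable_continuous_interval) (auto intro!: continuous_intros)
    show "(\<lambda>y. K * (1 / exp (\<alpha> * y))) integrable_on {a..c}"
      by (intro integrable_continuous_interval) (auto intro!: continuous_intros)
    fix y assume y: "y \<in> {a..c}"
    have qp: "q y = p y + s * (\<alpha> * (\<alpha> - 1)) * exp (\<alpha> * y)"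
      unfolding p_def q_def by (simp add: algebra_simps power2_eq_square)
    have "\<bar>q y\<bar> \<le> \<bar>p y\<bar> + \<bar>s * (\<alpha> * (\<alpha> - 1)) * exp (\<alpha> * y)\<bar>" unfolding qp by (rule abs_triangle_ineq)
    also have "\<bar>s * (\<alpha> * (\<alpha> - 1)) * exp (\<alpha> * y)\<bar> = \<alpha> * \<bar>\<alpha> - 1\<bar> * exp (\<alpha> * y)"
      using s1 al by (simp add: abs_mult)
    finally have qb: "\<bar>q y\<bar> \<le> \<bar>p y\<bar> + \<alpha> * \<bar>\<alpha> - 1\<bar> * exp (\<alpha> * y)" .
    have "\<bar>q y\<bar> / \<bar>p y\<bar>^2 \<le> (1/c0 + \<alpha> * \<bar>\<alpha> - 1\<bar> / c0^2) * (1 / exp (\<alpha> * y))"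
      apply (rule pw_bound) using c0 al qb low[OF y] unfolding p_def by auto
    thus "\<bar>q y\<bar> / (p y)^2 \<le> K * (1 / exp (\<alpha> * y))" by (simp add: K_def)
  qed
  also have "\<dots> \<le> K / \<alpha>" by (rule exp_int[OF al ac a0 K0])
  finally show ?thesis by (simp add: K_def)
qed
lemma exp_gap:
  fixes d t :: real
  assumes "d > 0" "\<bar>t\<bar> \<ge> d"
  shows "1 - exp (-d) \<le> \<bar>1 - exp t\<bar>"
proof (cases "t \<ge> 0")
  case True
  hence td: "t \<ge> d" using assms by simp
  have "exp d + exp (-d) \<ge> 2"
  proof -
    have "(exp d - 1)^2 \<ge> 0" by simp
    hence "exp d * exp d + 1 \<ge> 2 * exp d" by (simp add: power2_eq_square algebra_simps)
    hence "exp d + 1 / exp d \<ge> 2" by (simp add: field_simps)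
    thus ?thesis by (simp add: exp_minus divide_inverse)
  qed
  moreover have "exp d \<le> exp t" using td by simp
  moreover have "\<bar>1 - exp t\<bar> = exp t - 1" using True by simp
  ultimately show ?thesis by linarith
next
  case False
  hence "t \<le> -d" using assms by simp
  hence "exp t \<le> exp (-d)" by simp
  moreover have "exp t \<le> 1" using False by simp
  ultimately show ?thesis by simp
qed

lemma lowbound:
  fixes \<alpha> b s :: real
  assumes al: "\<alpha> > 0" and a1: "\<alpha> \<noteq> 1" and s: "s \<in> {-1, 1}"
  shows "\<exists>m. \<forall>y. 0 \<le> y \<longrightarrow> 1 \<le> \<bar>y - m\<bar> \<longrightarrow>
     \<alpha> * (1 - exp (- \<bar>\<alpha> - 1\<bar>)) * exp (\<alpha> * y) \<le> \<bar>b * exp y + s * \<alpha> * exp (\<alpha> * y)\<bar>"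
proof -
  define c0 where "c0 = \<alpha> * (1 - exp (- \<bar>\<alpha> - 1\<bar>))"
  have c0a: "c0 \<le> \<alpha>" unfolding c0_def using al by simp
  show ?thesis
  proof (cases "s * b \<ge> 0")
    case True
    have "c0 * exp (\<alpha> * y) \<le> \<bar>b * exp y + s * \<alpha> * exp (\<alpha> * y)\<bar>" for y
    proof -
      have "c0 * exp (\<alpha> * y) \<le> \<alpha> * exp (\<alpha> * y)" using c0a by simp
      also have "\<dots> \<le> \<bar>b * exp y + s * \<alpha> * exp (\<alpha> * y)\<bar>"
      proof (cases "s = 1")
        case True
        hence "b \<ge> 0" using \<open>s * b \<ge> 0\<close> by simp
        thus ?thesis using True al by simp
      next
        case False
        hence "s = -1" using s by simp
        hence "b \<le> 0" using \<open>s * b \<ge> 0\<close> by simp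
        hence "\<bar>b * exp y + s * \<alpha> * exp (\<alpha> * y)\<bar> = \<alpha> * exp (\<alpha> * y) - b * exp y"
        proof -
          have "b * exp y \<le> 0" using \<open>b \<le> 0\<close> by (simp add: mult_nonpos_nonneg)
          moreover have "\<alpha> * exp (\<alpha> * y) > 0" using al by simp
          ultimately show ?thesis using \<open>s = -1\<close> by simp
        qed
        thus ?thesis using \<open>b \<le> 0\<close> by (simp add: mult_nonpos_nonneg)
      qed
      finally show ?thesis .
    qed
    thus ?thesis unfolding c0_def by blast
  next
    case False
    define \<beta> where "\<beta> = \<alpha> - 1"
    have b0: "\<beta> \<noteq> 0" using a1 by (simp add: \<beta>_def)
    have bne: "b \<noteq> 0" using False by auto
    define m where "m = ln (\<bar>b\<bar> / \<alpha>) / \<beta>"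
    have em: "exp (\<beta> * m) = \<bar>b\<bar> / \<alpha>" unfolding m_def using b0 bne al by simp
    have bs: "b = - s * \<bar>b\<bar>" using s False by (auto simp: abs_if)
    have "c0 * exp (\<alpha> * y) \<le> \<bar>b * exp y + s * \<alpha> * exp (\<alpha> * y)\<bar>" if "1 \<le> \<bar>y - m\<bar>" for y
    proof -
      have "\<bar>b\<bar> * exp y = \<alpha> * exp (\<alpha> * y) * exp (\<beta> * (m - y))"
      proof -
        have "\<bar>b\<bar> * exp y = \<alpha> * exp (\<beta> * m) * exp y" using em al by simp
        also have "\<dots> = \<alpha> * exp (\<beta> * m + y)" by (simp add: exp_add)
        also have "\<beta> * m + y = \<alpha> * y + \<beta> * (m - y)" by (simp add: \<beta>_def algebra_simps)
        finally show ?thesis by (simp add: exp_add)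
      qed
      hence "b * exp y + s * \<alpha> * exp (\<alpha> * y) = s * (\<alpha> * exp (\<alpha> * y) * (1 - exp (\<beta> * (m - y))))"
        by (subst bs) (simp add: algebra_simps)
      hence eq: "\<bar>b * exp y + s * \<alpha> * exp (\<alpha> * y)\<bar> = \<alpha> * exp (\<alpha> * y) * \<bar>1 - exp (\<beta> * (m - y))\<bar>"
        using s al by (auto simp: abs_mult)
      have "\<bar>\<beta> * (m - y)\<bar> \<ge> \<bar>\<beta>\<bar>"
        using that by (simp add: abs_mult abs_minus_commute mult_left_mono[of 1 _ "\<bar>\<beta>\<bar>", simplified])
      hence "1 - exp (- \<bar>\<beta>\<bar>) \<le> \<bar>1 - exp (\<beta> * (m - y))\<bar>" using b0 by (intro exp_gap) auto
      hence "c0 * exp (\<alpha> * y) \<le> \<alpha> * exp (\<alpha> * y) * \<bar>1 - exp (\<beta> * (m - y))\<bar>"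
        unfolding c0_def \<beta>_def using al by (simp add: mult_left_mono)
      thus ?thesis using eq by simp
    qed
    thus ?thesis unfolding c0_def by blast
  qed
qed
theorem lemma3:
  fixes \<alpha> :: real
  assumes "\<alpha> > 0" and "\<alpha> \<noteq> 1"
  shows "\<exists>C. \<forall>R>0. \<forall>b::real. \<forall>s\<in>{-1, 1::real}.
           norm (integral {0..R}
             (\<lambda>x. cis (b * exp x + s * exp (\<alpha> * x)))) \<le> C"
proof -
  define c0 where "c0 = \<alpha> * (1 - exp (- \<bar>\<alpha> - 1\<bar>))"
  have c0: "c0 > 0" unfolding c0_def using assms by simp
  define K where "K = 2 / c0 + (1/c0 + \<alpha> * \<bar>\<alpha> - 1\<bar> / c0^2) / \<alpha>"
  have "norm (integral {0..R} (\<lambda>x. cis (b * exp x + s * exp (\<alpha> * x)))) \<le> 2 * K + 2"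
    if R: "R > 0" and s: "s \<in> {-1, 1}" for R b s
  proof -
    let ?f = "\<lambda>x. cis (b * exp x + s * exp (\<alpha> * x))"
    have s1: "\<bar>s\<bar> = 1" using s by auto
    have intg: "?f integrable_on {u..v}" for u v
      by (intro integrable_continuous_interval) (auto intro!: continuous_intros)
    obtain m where m: "\<And>y. 0 \<le> y \<Longrightarrow> 1 \<le> \<bar>y - m\<bar> \<Longrightarrow>
        c0 * exp (\<alpha> * y) \<le> \<bar>b * exp y + s * \<alpha> * exp (\<alpha> * y)\<bar>"
      using lowbound[OF assms s, of b] unfolding c0_def by blast
    define p where "p = min R (max 0 (m - 1))"
    define q where "q = min R (max 0 (m + 1))"
    have p0: "0 \<le> p" "p \<le> q" "q \<le> R" "q - p \<le> 2" using R unfolding p_def q_def by auto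
    have split: "integral {0..R} ?f = integral {0..p} ?f + (integral {p..q} ?f + integral {q..R} ?f)"
    proof -
      have "p \<le> R" using p0 by linarith
      have e1: "integral {0..p} ?f + integral {p..R} ?f = integral {0..R} ?f"
        by (rule Henstock_Kurzweil_Integration.integral_combine[OF p0(1) \<open>p \<le> R\<close> intg])
      have e2: "integral {p..q} ?f + integral {q..R} ?f = integral {p..R} ?f"
        by (rule Henstock_Kurzweil_Integration.integral_combine[OF p0(2) p0(3) intg])
      show ?thesis using e1 e2 by simp
    qed
    have b1: "norm (integral {0..p} ?f) \<le> K"
    proof (cases "p = 0")
      case True
      have "K \<ge> 0" unfolding K_def using c0 assms by simp
      thus ?thesis using True by simp
    next
      case False
      hence "p \<le> m - 1" using R unfolding p_def by (auto simp: min_def max_def split: if_splits)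
      show ?thesis unfolding K_def
        apply (rule pieceB[OF assms(1) s1 order_refl p0(1) c0])
        using m \<open>p \<le> m - 1\<close> by auto
    qed
    have b3: "norm (integral {q..R} ?f) \<le> K"
    proof (cases "q = R")
      case True
      have "K \<ge> 0" unfolding K_def using c0 assms by simp
      thus ?thesis using True by simp
    next
      case False
      hence "q \<ge> m + 1" using R unfolding q_def by (auto simp: min_def max_def split: if_splits)
      show ?thesis unfolding K_def
        apply (rule pieceB[OF assms(1) s1 _ p0(3) c0])
        using m \<open>q \<ge> m + 1\<close> p0 by auto
    qed
    have "norm (integral {p..q} ?f) \<le> integral {p..q} (\<lambda>_. 1::real)"
      by (rule integral_norm_bound_integral[OF intg]) auto
    also have "\<dots> = q - p" using p0 by simp
    finally have b2: "norm (integral {p..q} ?f) \<le> 2" using p0 by simp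
    show ?thesis unfolding split
      using norm_triangle_ineq[of "integral {0..p} ?f" "integral {p..q} ?f + integral {q..R} ?f"]
        norm_triangle_ineq[of "integral {p..q} ?f" "integral {q..R} ?f"] b1 b2 b3 by linarith
  qed
  thus ?thesis by blast
qed
end
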